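(* Under the hypotheses of Theorem 2 (bounds $0\le\nu_i<\mu_i$, $\sum\nu_i\le1\le\sum\mu_i$, $\Phi\in\Lambda$), suppose $\xi^*=\{(\boldsymbol{x}_i,w_i)\}$ is $\Phi$-optimal in $\Xi$ with $\Phi(\xi^* )<\infty$, and let $\mathcal{X}_1=\{\boldsymbol{x}_i:w_i=\nu_i\}$, $\mathcal{X}_3=\{\boldsymbol{x}_i:w_i=\mu_i\}$, $\mathcal{X}_2=\{\boldsymbol{x}_i:\nu_i<w_i<\mu_i\}$. If $\mathcal{X}_2\ne\emptyset$, then $F_\Phi(\xi^*;\boldsymbol{x}_i)$ takes a common value $s$ for all $\boldsymbol{x}_i\in\mathcal{X}_2$, and $$s=\frac{-\sum_{\boldsymbol{x}_i\in\mathcal{X}_1}F_\Phi(\xi^*;\boldsymbol{x}_i)\nu_i-\sum_{\boldsymbol{x}_i\in\mathcal{X}_3}F_\Phi(\xi^*;\boldsymbol{x}_i)\mu_i}{1-\left(\sum_{\boldsymbol{x}_i\in\mathcal{X}_1}\nu_i+\sum_{\boldsymbol{x}_i\in\mathcal{X}_3}\mu_i\right)}.$$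
   Context: Design space $\mathcal{X}=\{\boldsymbol{x}_1,\ldots,\boldsymbol{x}_N\}$; designs $\xi=\{(\boldsymbol{x}_i,w_i)\}$ with $w_i\ge0$, $\sum w_i=1$; $\Xi$ is the set of designs with $\nu_i\le w_i\le\mu_i$. $\Phi(\xi)$ is a criterion of $M(\xi)=\sum_iw_iI_{\boldsymbol\theta}(\boldsymbol{x}_i)$ ($+\infty$ when undefined). $F_\Phi(\xi,\eta)=\lim_{\alpha\downarrow0}[\Phi((1-\alpha)\xi+\alpha\eta)-\Phi(\xi)]/\alpha$ and $F_\Phi(\xi;\boldsymbol{x}_i)=F_\Phi(\xi,\delta_{\boldsymbol{x}_i})$ with $\delta_{\boldsymbol{x}_i}$ the one-point design at $\boldsymbol{x}_i$. $\Lambda$: criteria that are convex in the weights, linearly differentiable ($F_\Phi(\xi,\eta)=\sum_i\lambda_iF_\Phi(\xi;\boldsymbol{x}_i)$ for $\eta=\{(\boldsymbol{x}_i,\lambda_i)\}$ whenever $\Phi(\xi)<\infty$), and infinitely differentiable along line segments of designs. *)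

theory Defs
  imports "HOL-Analysis.Analysis"
begin

text \<open>Design points x_1..x_N are indexed by a finite type 'n; a design is its weight
vector w :: 'n => real. Criterion values live in ereal (+infinity when undefined).\<close>

definition is_design :: "('n::finite \<Rightarrow> real) \<Rightarrow> bool" where
  "is_design w \<longleftrightarrow> (\<forall>i. 0 \<le> w i) \<and> sum w UNIV = 1"

definition Xi :: "('n::finite \<Rightarrow> real) \<Rightarrow> ('n \<Rightarrow> real) \<Rightarrow> ('n \<Rightarrow> real) set" where
  "Xi nu mu = {w. is_design w \<and> (\<forall>i. nu i \<le> w i \<and> w i \<le> mu i)}"

definition info_matrix :: "('n::finite \<Rightarrow> real^'p^'p) \<Rightarrow> ('n \<Rightarrow> real) \<Rightarrow> real^'p^'p" where
  "info_matrix I w = (\<Sum>i\<in>UNIV. w i *\<^sub>R I i)"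

definition crit :: "(real^'p^'p \<Rightarrow> ereal) \<Rightarrow> ('n::finite \<Rightarrow> real^'p^'p) \<Rightarrow> ('n \<Rightarrow> real) \<Rightarrow> ereal" where
  "crit psi I w = psi (info_matrix I w)"

definition mix :: "real \<Rightarrow> ('n \<Rightarrow> real) \<Rightarrow> ('n \<Rightarrow> real) \<Rightarrow> ('n \<Rightarrow> real)" where
  "mix \<alpha> \<xi> \<eta> = (\<lambda>i. (1 - \<alpha>) * \<xi> i + \<alpha> * \<eta> i)"

definition delta :: "'n \<Rightarrow> ('n \<Rightarrow> real)" where
  "delta i = (\<lambda>j. if j = i then 1 else 0)"

definition diff_quot :: "(('n \<Rightarrow> real) \<Rightarrow> ereal) \<Rightarrow> ('n \<Rightarrow> real) \<Rightarrow> ('n \<Rightarrow> real) \<Rightarrow> real \<Rightarrow> ereal" where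
  "diff_quot Phi \<xi> \<eta> \<alpha> = (Phi (mix \<alpha> \<xi> \<eta>) - Phi \<xi>) / ereal \<alpha>"

definition Fdir :: "(('n \<Rightarrow> real) \<Rightarrow> ereal) \<Rightarrow> ('n \<Rightarrow> real) \<Rightarrow> ('n \<Rightarrow> real) \<Rightarrow> ereal" where
  "Fdir Phi \<xi> \<eta> = Lim (at_right 0) (diff_quot Phi \<xi> \<eta>)"

definition Fpt :: "(('n \<Rightarrow> real) \<Rightarrow> ereal) \<Rightarrow> ('n \<Rightarrow> real) \<Rightarrow> 'n \<Rightarrow> ereal" where
  "Fpt Phi \<xi> i = Fdir Phi \<xi> (delta i)"

definition convex_in_weights :: "(('n::finite \<Rightarrow> real) \<Rightarrow> ereal) \<Rightarrow> bool" where
  "convex_in_weights Phi \<longleftrightarrow> (\<forall>\<xi> \<eta> t. is_design \<xi> \<and> is_design \<eta> \<and> 0 \<le> t \<and> t \<le> 1 \<longrightarrow>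
      Phi (mix t \<xi> \<eta>) \<le> ereal (1 - t) * Phi \<xi> + ereal t * Phi \<eta>)"

definition linearly_differentiable :: "(('n::finite \<Rightarrow> real) \<Rightarrow> ereal) \<Rightarrow> bool" where
  "linearly_differentiable Phi \<longleftrightarrow> (\<forall>\<xi> \<eta>. is_design \<xi> \<and> is_design \<eta> \<and> Phi \<xi> < \<infinity> \<longrightarrow>
      (\<exists>l. (diff_quot Phi \<xi> \<eta> \<longlongrightarrow> l) (at_right 0)) \<and>
      Fdir Phi \<xi> \<eta> = (\<Sum>i\<in>UNIV. ereal (\<eta> i) * Fpt Phi \<xi> i))"

definition smooth_on_segments :: "(('n::finite \<Rightarrow> real) \<Rightarrow> ereal) \<Rightarrow> bool" where
  "smooth_on_segments Phi \<longleftrightarrow> (\<forall>\<xi> \<eta>. is_design \<xi> \<and> is_design \<eta> \<and> Phi \<xi> < \<infinity> \<and> Phi \<eta> < \<infinity> \<longrightarrow>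
      (\<exists>D :: nat \<Rightarrow> real \<Rightarrow> real.
         (\<forall>\<alpha>\<in>{0..1}. Phi (mix \<alpha> \<xi> \<eta>) = ereal (D 0 \<alpha>)) \<and>
         (\<forall>n. \<forall>\<alpha>\<in>{0..1}. (D n has_real_derivative D (Suc n) \<alpha>) (at \<alpha> within {0..1}))))"

definition in_Lambda :: "(('n::finite \<Rightarrow> real) \<Rightarrow> ereal) \<Rightarrow> bool" where
  "in_Lambda Phi \<longleftrightarrow> convex_in_weights Phi \<and> linearly_differentiable Phi \<and> smooth_on_segments Phi"

definition optimal_in :: "(('n::finite \<Rightarrow> real) \<Rightarrow> ereal) \<Rightarrow> ('n \<Rightarrow> real) set \<Rightarrow> ('n \<Rightarrow> real) \<Rightarrow> bool" where
  "optimal_in Phi S w \<longleftrightarrow> w \<in> S \<and> (\<forall>\<eta>\<in>S. Phi w \<le> Phi \<eta>)"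

end

theory Submission
  imports Defs
begin

lemma sum_MInf_aux:
  fixes g :: "'a \<Rightarrow> ereal"
  assumes "finite A" "\<forall>a\<in>A. g a \<noteq> \<infinity>" "a \<in> A" "g a = -\<infinity>"
  shows "sum g A = -\<infinity>"
proof -
  have "sum g A = g a + sum g (A - {a})"
    using assms by (simp add: sum.remove)
  moreover have "sum g (A - {a}) \<noteq> \<infinity>"
    using assms by (simp add: sum_Pinfty)
  ultimately show ?thesis using assms by simp
qed

lemma Xi_mix:
  assumes "\<xi> \<in> Xi nu mu" "\<eta> \<in> Xi nu mu" "0 \<le> a" "a \<le> 1"
  shows "mix a \<xi> \<eta> \<in> Xi nu mu"
proof -
  have d1: "\<forall>i. 0 \<le> \<xi> i" "sum \<xi> UNIV = 1" "\<forall>i. nu i \<le> \<xi> i \<and> \<xi> i \<le> mu i"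
    using assms(1) by (auto simp: Xi_def is_design_def)
  have d2: "\<forall>i. 0 \<le> \<eta> i" "sum \<eta> UNIV = 1" "\<forall>i. nu i \<le> \<eta> i \<and> \<eta> i \<le> mu i"
    using assms(2) by (auto simp: Xi_def is_design_def)
  have "sum (mix a \<xi> \<eta>) UNIV = (1 - a) * sum \<xi> UNIV + a * sum \<eta> UNIV"
    by (simp add: mix_def sum.distrib sum_distrib_left)
  also have "\<dots> = 1" using d1 d2 by simp
  finally have s: "sum (mix a \<xi> \<eta>) UNIV = 1" .
  have "\<forall>i. 0 \<le> mix a \<xi> \<eta> i \<and> nu i \<le> mix a \<xi> \<eta> i \<and> mix a \<xi> \<eta> i \<le> mu i"
  proof
    fix i
    have "(1 - a) * nu i \<le> (1 - a) * \<xi> i" "a * nu i \<le> a * \<eta> i"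
      "(1 - a) * \<xi> i \<le> (1 - a) * mu i" "a * \<eta> i \<le> a * mu i"
      "0 \<le> (1 - a) * \<xi> i" "0 \<le> a * \<eta> i"
      using d1 d2 assms(3,4) by (auto intro: mult_left_mono)
    then show "0 \<le> mix a \<xi> \<eta> i \<and> nu i \<le> mix a \<xi> \<eta> i \<and> mix a \<xi> \<eta> i \<le> mu i"
      by (simp add: mix_def algebra_simps)
  qed
  with s show ?thesis by (simp add: Xi_def is_design_def)
qed

theorem mainTheorem3:
  fixes I :: "'n::finite \<Rightarrow> real^'p^'p"
    and psi :: "real^'p^'p \<Rightarrow> ereal"
    and nu mu w :: "'n \<Rightarrow> real"
  assumes crit_vals: "\<forall>A. psi A \<noteq> -\<infinity>"
    and bounds: "\<forall>i. 0 \<le> nu i \<and> nu i < mu i"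
    and sum_nu: "sum nu UNIV \<le> 1"
    and sum_mu: "1 \<le> sum mu UNIV"
    and Lambda: "in_Lambda (crit psi I)"
    and opt: "optimal_in (crit psi I) (Xi nu mu) w"
    and fin: "crit psi I w < \<infinity>"
    and X2_ne: "{i. nu i < w i \<and> w i < mu i} \<noteq> {}"
  shows "\<exists>s::real.
    (\<forall>i\<in>{i. nu i < w i \<and> w i < mu i}. Fpt (crit psi I) w i = ereal s) \<and>
    ereal s = (- (\<Sum>i\<in>{i. w i = nu i}. Fpt (crit psi I) w i * ereal (nu i))
               - (\<Sum>i\<in>{i. w i = mu i}. Fpt (crit psi I) w i * ereal (mu i)))
              / ereal (1 - ((\<Sum>i\<in>{i. w i = nu i}. nu i) + (\<Sum>i\<in>{i. w i = mu i}. mu i)))"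
proof -
  define Phi where "Phi = crit psi I"
  define F where "F = Fpt Phi w"
  define f where "f k = real_of_ereal (F k)" for k
  have wXi: "w \<in> Xi nu mu" and wopt: "\<forall>\<eta>\<in>Xi nu mu. Phi w \<le> Phi \<eta>"
    using opt by (auto simp: optimal_in_def Phi_def)
  have wd: "is_design w" using wXi by (simp add: Xi_def)
  have wb: "\<forall>i. nu i \<le> w i \<and> w i \<le> mu i" using wXi by (simp add: Xi_def)
  have nm: "Phi w \<noteq> -\<infinity>" using crit_vals by (simp add: Phi_def crit_def)
  obtain c where c: "Phi w = ereal c" using fin nm unfolding Phi_def[symmetric]
    by (cases "Phi w") auto
  have LD: "linearly_differentiable Phi" using Lambda by (simp add: in_Lambda_def Phi_def)
  have Fdirval: "\<And>\<eta>. is_design \<eta> \<Longrightarrow> Fdir Phi w \<eta> = (\<Sum>i\<in>UNIV. ereal (\<eta> i) * F i)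
       \<and> (\<exists>l. (diff_quot Phi w \<eta> \<longlongrightarrow> l) (at_right 0))"
    using LD wd c unfolding linearly_differentiable_def F_def by auto
  have mixww: "\<And>a. mix a w w = w" by (rule ext) (simp add: mix_def algebra_simps)
  have dq0: "diff_quot Phi w w = (\<lambda>a. 0)"
    by (rule ext) (simp add: diff_quot_def mixww c)
  have "Fdir Phi w w = 0"
    unfolding Fdir_def dq0 by (rule tendsto_Lim) auto
  hence F0: "(\<Sum>i\<in>UNIV. ereal (w i) * F i) = 0" using Fdirval[OF wd] by simp
  have wnn: "\<forall>i. 0 \<le> w i" using wd by (simp add: is_design_def)
  have notinf: "\<forall>k. w k > 0 \<longrightarrow> F k \<noteq> \<infinity>"
  proof (intro allI impI notI)
    fix k assume "w k > 0" "F k = \<infinity>"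
    hence "(\<Sum>i\<in>UNIV. ereal (w i) * F i) = \<infinity>"
      by (subst sum_Pinfty) (auto intro!: bexI[of _ k])
    with F0 show False by simp
  qed
  have terms_ninf: "\<forall>i. ereal (w i) * F i \<noteq> \<infinity>"
  proof
    fix i show "ereal (w i) * F i \<noteq> \<infinity>"
    proof (cases "w i = 0")
      case True thus ?thesis by (simp add: zero_ereal_def[symmetric])
    next
      case False
      hence "w i > 0" using wnn by (simp add: less_le)
      thus ?thesis using notinf
        by (cases "F i") (auto simp: ereal_mult_eq_PInfty)
    qed
  qed
  have notminf: "\<forall>k. w k > 0 \<longrightarrow> F k \<noteq> -\<infinity>"
  proof (intro allI impI notI)
    fix k assume "w k > 0" "F k = -\<infinity>"
    hence "ereal (w k) * F k = -\<infinity>" by simp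
    hence "(\<Sum>i\<in>UNIV. ereal (w i) * F i) = -\<infinity>"
      using terms_ninf by (intro sum_MInf_aux[of UNIV _ k]) auto
    with F0 show False by simp
  qed
  have Ff: "\<And>k. w k > 0 \<Longrightarrow> F k = ereal (f k)"
    using notinf notminf unfolding f_def by (metis real_of_ereal.elims ereal_infty_less(1) less_ereal.simps(2))
  have sumconv: "\<And>\<eta>. (\<forall>k. \<eta> k \<noteq> 0 \<longrightarrow> w k > 0) \<Longrightarrow>
      (\<Sum>i\<in>UNIV. ereal (\<eta> i) * F i) = ereal (\<Sum>i\<in>UNIV. \<eta> i * f i)"
  proof -
    fix \<eta> :: "'n \<Rightarrow> real" assume h: "\<forall>k. \<eta> k \<noteq> 0 \<longrightarrow> w k > 0"
    have "\<And>i. ereal (\<eta> i) * F i = ereal (\<eta> i * f i)"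
    proof -
      fix i show "ereal (\<eta> i) * F i = ereal (\<eta> i * f i)"
        using h Ff[of i] by (cases "\<eta> i = 0") (auto simp: zero_ereal_def[symmetric])
    qed
    thus "(\<Sum>i\<in>UNIV. ereal (\<eta> i) * F i) = ereal (\<Sum>i\<in>UNIV. \<eta> i * f i)" by simp
  qed
  have wf0: "(\<Sum>i\<in>UNIV. w i * f i) = 0"
    using F0 sumconv[of w] wnn by (simp add: less_le)

  have pw: "\<And>i. ereal (w i) * F i = ereal (w i * f i)"
  proof -
    fix i show "ereal (w i) * F i = ereal (w i * f i)"
      using Ff[of i] wnn by (cases "w i = 0") (auto simp: zero_ereal_def[symmetric] less_le)
  qed
  define S1 where "S1 = {i. w i = nu i}"
  define S2 where "S2 = {i. nu i < w i \<and> w i < mu i}"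
  define S3 where "S3 = {i. w i = mu i}"
  have part: "\<And>g::'n \<Rightarrow> real. sum g UNIV = sum g S1 + sum g S2 + sum g S3"
  proof -
    fix g :: "'n \<Rightarrow> real"
    have U: "UNIV = S1 \<union> S2 \<union> S3" using wb unfolding S1_def S2_def S3_def
      by (auto simp: less_le)
    have d1: "S1 \<inter> S2 = {}" "(S1 \<union> S2) \<inter> S3 = {}" using bounds unfolding S1_def S2_def S3_def
      by auto (metis less_irrefl)+
    have "sum g UNIV = sum g (S1 \<union> S2) + sum g S3"
      by (subst U, rule sum.union_disjoint) (use d1 in auto)
    also have "sum g (S1 \<union> S2) = sum g S1 + sum g S2"
      by (rule sum.union_disjoint) (use d1 in auto)
    finally show "sum g UNIV = sum g S1 + sum g S2 + sum g S3" .
  qed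
  have mono: "f i \<le> f j" if i: "i \<in> S2" and j: "j \<in> S2" for i j
  proof (cases "i = j")
    case True thus ?thesis by simp
  next
    case False
    define t where "t = min (w i - nu i) (mu j - w j)"
    have tpos: "t > 0" using i j unfolding S2_def t_def by auto
    define \<eta> where "\<eta> k = w k + (if k = j then t else 0) - (if k = i then t else 0)" for k
    have \<eta>Xi: "\<eta> \<in> Xi nu mu"
    proof -
      have "sum \<eta> UNIV = sum w UNIV + t - t"
        by (simp add: \<eta>_def sum.distrib sum_subtractf)
      hence s1: "sum \<eta> UNIV = 1" using wd by (simp add: is_design_def)
      have t1: "t \<le> w i - nu i" "t \<le> mu j - w j" unfolding t_def by auto
      have "\<forall>k. nu k \<le> \<eta> k \<and> \<eta> k \<le> mu k"
      proof
        fix k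
        show "nu k \<le> \<eta> k \<and> \<eta> k \<le> mu k"
        proof (cases "k = i")
          case True thus ?thesis using False t1 tpos wb[rule_format, of i] by (simp add: \<eta>_def)
        next
          case ki: False
          show ?thesis
          proof (cases "k = j")
            case True thus ?thesis using ki t1 tpos wb[rule_format, of j] by (simp add: \<eta>_def)
          next
            case False thus ?thesis using ki wb[rule_format, of k] by (simp add: \<eta>_def)
          qed
        qed
      qed
      moreover have "\<forall>k. 0 \<le> \<eta> k"
      proof
        fix k
        have "nu k \<le> \<eta> k" using calculation by blast
        thus "0 \<le> \<eta> k" using bounds[rule_format, of k] by linarith
      qed
      ultimately show ?thesis using s1 by (simp add: Xi_def is_design_def)
    qed
    have \<eta>d: "is_design \<eta>" using \<eta>Xi by (simp add: Xi_def)
    have supp: "\<forall>k. \<eta> k \<noteq> 0 \<longrightarrow> w k > 0"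
    proof (intro allI impI)
      fix k assume k: "\<eta> k \<noteq> 0"
      have pi: "w i > 0" "w j > 0" using i j bounds[rule_format, of i] bounds[rule_format, of j] unfolding S2_def by auto
      show "w k > 0"
      proof (cases "k = i \<or> k = j")
        case True thus ?thesis using pi by auto
      next
        case False
        hence "\<eta> k = w k" by (simp add: \<eta>_def)
        thus ?thesis using k wnn by (simp add: less_le)
      qed
    qed
    obtain l where l: "(diff_quot Phi w \<eta> \<longlongrightarrow> l) (at_right 0)" using Fdirval[OF \<eta>d] by blast
    have Fl: "Fdir Phi w \<eta> = l" unfolding Fdir_def using l by (rule tendsto_Lim[rotated]) simp
    have ev: "eventually (\<lambda>y. 0 \<le> diff_quot Phi w \<eta> y) (at_right 0)"
      unfolding eventually_at_right_field
    proof (intro exI[of _ 1] conjI allI impI)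
      fix y :: real assume y: "0 < y" "y < 1"
      have "mix y w \<eta> \<in> Xi nu mu" using Xi_mix[OF wXi \<eta>Xi] y by simp
      hence ge: "ereal c \<le> Phi (mix y w \<eta>)" using wopt c by auto
      show "0 \<le> diff_quot Phi w \<eta> y"
        unfolding diff_quot_def c using ge y by (cases "Phi (mix y w \<eta>)") auto
    qed simp
    have "0 \<le> l" by (rule tendsto_lowerbound[OF l ev]) simp
    hence "0 \<le> ereal (\<Sum>k\<in>UNIV. \<eta> k * f k)"
      using Fl Fdirval[OF \<eta>d] sumconv[OF supp] by simp
    moreover have "(\<Sum>k\<in>UNIV. \<eta> k * f k) = (\<Sum>k\<in>UNIV. w k * f k) + t * f j - t * f i"
    proof -
      have "(\<lambda>k. \<eta> k * f k) = (\<lambda>k. w k * f k + (if k = j then t * f k else 0) - (if k = i then t * f k else 0))"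
        by (rule ext) (auto simp: \<eta>_def algebra_simps)
      hence "(\<Sum>k\<in>UNIV. \<eta> k * f k) = (\<Sum>k\<in>UNIV. w k * f k + (if k = j then t * f k else 0) - (if k = i then t * f k else 0))"
        by (rule arg_cong)
      also have "\<dots> = (\<Sum>k\<in>UNIV. w k * f k) + (\<Sum>k\<in>UNIV. (if k = j then t * f k else 0)) - (\<Sum>k\<in>UNIV. (if k = i then t * f k else 0))"
        by (simp only: sum.distrib sum_subtractf)
      also have "\<dots> = (\<Sum>k\<in>UNIV. w k * f k) + t * f j - t * f i"
        using sum.delta[of UNIV j "\<lambda>k. t * f k"] sum.delta[of UNIV i "\<lambda>k. t * f k"] by simp
      finally show ?thesis .
    qed
    ultimately have "0 \<le> t * (f j - f i)" using wf0 by (simp add: algebra_simps)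
    thus ?thesis using tpos by (simp add: zero_le_mult_iff)
  qed
  obtain i0 where i0: "i0 \<in> S2" using X2_ne unfolding S2_def by auto
  define s where "s = f i0"
  have allS2: "\<forall>i\<in>S2. f i = s" using mono[OF _ i0] mono[OF i0] unfolding s_def by (auto intro: order_antisym)
  have FS2: "\<forall>i\<in>S2. F i = ereal s"
  proof
    fix i assume i: "i \<in> S2"
    hence "w i > 0" using bounds[rule_format, of i] unfolding S2_def by auto
    thus "F i = ereal s" using Ff allS2 i by auto
  qed
  define A where "A = (\<Sum>i\<in>S1. w i * f i)"
  define B where "B = (\<Sum>i\<in>S3. w i * f i)"
  define d where "d = 1 - ((\<Sum>i\<in>S1. nu i) + (\<Sum>i\<in>S3. mu i))"
  have sA: "(\<Sum>i\<in>S1. F i * ereal (nu i)) = ereal A"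
  proof -
    have "(\<Sum>i\<in>S1. F i * ereal (nu i)) = (\<Sum>i\<in>S1. ereal (w i * f i))"
    proof (rule sum.cong)
      fix x assume "x \<in> S1"
      hence "nu x = w x" by (simp add: S1_def)
      thus "F x * ereal (nu x) = ereal (w x * f x)" using pw[of x] by (simp add: mult.commute)
    qed simp
    thus ?thesis by (simp add: A_def)
  qed
  have sB: "(\<Sum>i\<in>S3. F i * ereal (mu i)) = ereal B"
  proof -
    have "(\<Sum>i\<in>S3. F i * ereal (mu i)) = (\<Sum>i\<in>S3. ereal (w i * f i))"
    proof (rule sum.cong)
      fix x assume "x \<in> S3"
      hence "mu x = w x" by (simp add: S3_def)
      thus "F x * ereal (mu x) = ereal (w x * f x)" using pw[of x] by (simp add: mult.commute)
    qed simp
    thus ?thesis by (simp add: B_def)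
  qed
  have dS2: "d = (\<Sum>i\<in>S2. w i)"
  proof -
    have "(\<Sum>i\<in>S1. nu i) = (\<Sum>i\<in>S1. w i)" "(\<Sum>i\<in>S3. mu i) = (\<Sum>i\<in>S3. w i)"
      by (auto simp: S1_def S3_def intro: sum.cong)
    thus ?thesis using part[of w] wd by (simp add: d_def is_design_def)
  qed
  have dpos: "d > 0"
  proof -
    have "w i0 > 0" using i0 bounds[rule_format, of i0] unfolding S2_def by auto
    moreover have "w i0 \<le> (\<Sum>i\<in>S2. w i)"
      using i0 wnn by (intro member_le_sum) auto
    ultimately show ?thesis using dS2 by simp
  qed
  have eq: "A + B + s * d = 0"
  proof -
    have "(\<Sum>i\<in>S2. w i * f i) = s * d" unfolding dS2 sum_distrib_left
      using allS2 by (auto intro: sum.cong)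
    thus ?thesis using part[of "\<lambda>i. w i * f i"] wf0 A_def B_def by simp
  qed
  have sval: "s = (- A - B) / d" using eq dpos by (simp add: field_simps)
  show ?thesis
    unfolding Phi_def[symmetric] F_def[symmetric]
    apply (rule exI[of _ s])
    using FS2 sA sB sval dpos unfolding S1_def[symmetric] S2_def[symmetric] S3_def[symmetric] d_def[symmetric]
    by simp
qed

end
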